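(* Let $I=[s,t]\subseteq\mathbb R/\mathbb Z$ be an $R$-interval, and let $(c_1,c_2)$ be either (blue, red) or (red, blue). Then there exist points $x_1,x_2$ with $s<x_1<x_2<t$ (in the cyclic order of $I$) such that $[s,x_1],[x_1,x_2],[x_2,t]$ are $R$-intervals, $x_1$ has color $c_1$ and $x_2$ has color $c_2$.
   Context: Let $\sigma_3(t)=3t$ on $\mathbb R/\mathbb Z$. An interval $I=[s,t]\subseteq\mathbb R/\mathbb Z$ is an $R$-interval if there is $n\ge0$ such that $\sigma_3^n$ maps $(s,t)$ homeomorphically onto $(0,1)$, $(0,\frac23)$ or $(\frac13,1)$. Colors of $3$-adic rationals: a point $p/3^n$ with $n\ge1$, $0<p<3^n$, $3\nmid p$ is red if $p\equiv1\pmod 3$ and blue if $p\equiv2\pmod3$; the point $0$ is blue. *)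

theory Defs
  imports Complex_Main
begin

(* Points of R/Z are represented by real lifts; x and x + k (k integer) denote the same point.
   A closed arc [s,t] of R/Z (traversed counterclockwise from s to t) is represented by
   lifts s < t <= s + 1 (t = s + 1 means s = t in R/Z, the arc being the whole circle). *)

(* sigma_3^n maps the open arc (s,t) homeomorphically onto the open arc (a,b) of R/Z
   iff it is injective on (s,t), i.e. 3^n (t - s) <= 1, and the image arc, which is
   (3^n s, 3^n t) mod 1, equals (a,b).  The three target arcs are
   (0,1) = circle minus 0 (length 1, start 0), (0,2/3) (length 2/3, start 0),
   (1/3,1) (length 2/3, start 1/3). *)
definition R_interval :: "real \<Rightarrow> real \<Rightarrow> bool" where
  "R_interval s t \<longleftrightarrow> s < t \<and> t \<le> s + 1 \<and>
     (\<exists>n::nat.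
        (3^n * (t - s) = 1 \<and> frac (3^n * s) = 0) \<or>
        (3^n * (t - s) = 2/3 \<and> frac (3^n * s) = 0) \<or>
        (3^n * (t - s) = 2/3 \<and> frac (3^n * s) = 1/3))"

datatype color = Red | Blue

definition has_color :: "real \<Rightarrow> color \<Rightarrow> bool" where
  "has_color x c \<longleftrightarrow>
     (c = Blue \<and> frac x = 0) \<or>
     (\<exists>(n::nat) (p::nat). n \<ge> 1 \<and> 0 < p \<and> p < 3^n \<and> \<not> 3 dvd p \<and>
        frac x = real p / 3^n \<and>
        ((c = Red \<and> p mod 3 = 1) \<or> (c = Blue \<and> p mod 3 = 2)))"

end

theory Submission
  imports Defs
begin

lemma R1: fixes a::int assumes "x = a/3^m" "y = (a+1)/3^m" shows "R_interval x y"
proof -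
  have p: "(3::real)^m \<ge> 1" by simp
  have d: "y - x = 1/3^m" using assms by (simp add: field_simps)
  have "1/(3::real)^m \<le> 1" using p by simp
  moreover have "0 < 1/(3::real)^m" by simp
  ultimately have "x < y" "y \<le> x + 1" using d by linarith+
  moreover have "3^m * x = of_int a" using assms by simp
  ultimately show ?thesis unfolding R_interval_def using d
    by (intro conjI exI[of _ m]) auto
qed

lemma R2: fixes a::int assumes "x = (3*a)/3^(m+1)" "y = (3*a+2)/3^(m+1)" shows "R_interval x y"
proof -
  have p: "(3::real)^m \<ge> 1" by simp
  have d: "y - x = 2/3/3^m" using assms by (simp add: field_simps)
  have "2/3/(3::real)^m \<le> 1" using p by (simp add: field_simps, linarith)
  moreover have "0 < 2/3/(3::real)^m" by simp
  ultimately have "x < y" "y \<le> x + 1" using d by linarith+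
  moreover have "3^m * x = of_int a" using assms by simp
  moreover have "3^m * (y - x) = 2/3" using d by simp
  ultimately show ?thesis unfolding R_interval_def using d
    by (intro conjI exI[of _ m]) auto
qed

lemma R3: fixes a::int assumes "x = (3*a+1)/3^(m+1)" "y = (3*a+3)/3^(m+1)" shows "R_interval x y"
proof -
  have p: "(3::real)^m \<ge> 1" by simp
  have d: "y - x = 2/3/3^m" using assms by (simp add: field_simps)
  have "2/3/(3::real)^m \<le> 1" using p by (simp add: field_simps, linarith)
  moreover have "0 < 2/3/(3::real)^m" by simp
  ultimately have "x < y" "y \<le> x + 1" using d by linarith+
  moreover have "3^m * x = of_int a + 1/3" using assms by (simp add: field_simps)
  moreover have "3^m * (y - x) = 2/3" using d by simp
  moreover have "frac (of_int a + 1/3 :: real) = 1/3" by (simp add: frac_unique_iff)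
  ultimately show ?thesis unfolding R_interval_def using d
    by (intro conjI exI[of _ m]) auto
qed

lemma col: fixes a::int assumes "\<not> 3 dvd a" "N \<ge> 1" "x = a/3^N"
  shows "has_color x (if a mod 3 = 1 then Red else Blue)"
proof -
  define r where "r = a mod 3^N"
  define q where "q = a div 3^N"
  have a: "a = 3^N * q + r" unfolding r_def q_def by simp
  have r0: "0 \<le> r" "r < 3^N" unfolding r_def by auto
  have "3 dvd (3::int)^N" using assms(2) by (simp add: dvd_power)
  then have rm: "r mod 3 = a mod 3" unfolding r_def by (simp add: mod_mod_cancel)
  have "r \<noteq> 0" using rm assms(1) by auto
  with r0 have rp: "0 < r" by simp
  have "x = of_int q + of_int r / 3^N" using assms(3) a by (simp add: field_simps)
  moreover have "of_int r / (3::real)^N < 1" using r0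
    by (simp add: divide_less_eq)
  ultimately have fx: "frac x = real (nat r) / 3^N" using r0 by (simp add: frac_unique_iff)
  have "a mod 3 = 1 \<or> a mod 3 = 2" using assms(1) by presburger
  define p where "p = nat r"
  have rp': "r = int p" using r0 unfolding p_def by simp
  have p1: "0 < p" using rp rp' by simp
  have p2: "p < 3^N" using r0 rp' by (metis of_nat_less_iff of_nat_numeral of_nat_power)
  have p3: "int (p mod 3) = a mod 3" using rm rp' by (simp add: zmod_int)
  have p4: "\<not> 3 dvd p" using p3 assms(1) by presburger
  have fx': "frac x = real p / 3^N" using fx unfolding p_def by simp
  show ?thesis unfolding has_color_def
    apply (rule disjI2)
    apply (rule exI[where x=N])
    apply (rule exI[where x=p])
    using assms(2) p1 p2 p3 p4 fx' \<open>a mod 3 = 1 \<or> a mod 3 = 2\<close> by auto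
qed

lemma colB: fixes a::int assumes "a mod 3 = 2" "N \<ge> 1" "x = a/3^N" shows "has_color x Blue"
proof -
  have "\<not> 3 dvd a" "a mod 3 \<noteq> 1" using assms(1) by presburger+
  then show ?thesis using col[OF _ assms(2,3)] by simp
qed

lemma colR: fixes a::int assumes "a mod 3 = 1" "N \<ge> 1" "x = a/3^N" shows "has_color x Red"
proof -
  have "\<not> 3 dvd a" using assms(1) by presburger
  then show ?thesis using col[OF _ assms(2,3)] assms(1) by simp
qed

lemma pos3: "(0::real) < 3^n" by simp

lemma case1:
  fixes k::int assumes "s = k/3^n" "t = (k+1)/3^n"
    and "(c1, c2) = (Blue, Red) \<or> (c1, c2) = (Red, Blue)"
  shows "\<exists>x1 x2. s < x1 \<and> x1 < x2 \<and> x2 < t \<and>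
           R_interval s x1 \<and> R_interval x1 x2 \<and> R_interval x2 t \<and>
           has_color x1 c1 \<and> has_color x2 c2"
  using assms(3)
proof
  assume c: "(c1, c2) = (Blue, Red)"
  define x1 where "x1 = (9*k+2)/(3::real)^(n+2)"
  define x2 where "x2 = (9*k+3)/(3::real)^(n+2)"
  have "R_interval s x1" by (rule R2[of _ "3*k" "n+1"]) (auto simp: assms x1_def field_simps)
  moreover have "R_interval x1 x2" by (rule R1[of _ "9*k+2" "n+2"]) (auto simp: x1_def x2_def field_simps)
  moreover have "R_interval x2 t" by (rule R3[of _ "k" "n"]) (auto simp: assms x2_def field_simps)
  moreover have "has_color x1 Blue" by (rule colB[of "9*k+2" "n+2"]) (presburger, simp, simp add: x1_def field_simps)
  moreover have "has_color x2 Red" by (rule colR[of "3*k+1" "n+1"]) (presburger, simp, simp add: x2_def field_simps)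
  ultimately show ?thesis using c unfolding R_interval_def by blast
next
  assume c: "(c1, c2) = (Red, Blue)"
  define x1 where "x1 = (3*k+1)/(3::real)^(n+1)"
  define x2 where "x2 = (3*k+2)/(3::real)^(n+1)"
  have "R_interval s x1" by (rule R1[of _ "3*k" "n+1"]) (auto simp: assms x1_def field_simps)
  moreover have "R_interval x1 x2" by (rule R1[of _ "3*k+1" "n+1"]) (auto simp: x1_def x2_def field_simps)
  moreover have "R_interval x2 t" by (rule R1[of _ "3*k+2" "n+1"]) (auto simp: assms x2_def field_simps)
  moreover have "has_color x1 Red" by (rule colR[of "3*k+1" "n+1"]) (presburger, simp, simp add: x1_def field_simps)
  moreover have "has_color x2 Blue" by (rule colB[of "3*k+2" "n+1"]) (presburger, simp, simp add: x2_def field_simps)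
  ultimately show ?thesis using c unfolding R_interval_def by blast
qed


lemma case2:
  fixes k::int assumes "s = k/3^n" "t = (3*k+2)/3^(n+1)"
    and "(c1, c2) = (Blue, Red) \<or> (c1, c2) = (Red, Blue)"
  shows "\<exists>x1 x2. s < x1 \<and> x1 < x2 \<and> x2 < t \<and>
           R_interval s x1 \<and> R_interval x1 x2 \<and> R_interval x2 t \<and>
           has_color x1 c1 \<and> has_color x2 c2"
  using assms(3)
proof
  assume c: "(c1, c2) = (Blue, Red)"
  define x1 where "x1 = (9*k+2)/(3::real)^(n+2)"
  define x2 where "x2 = (3*k+1)/(3::real)^(n+1)"
  have "R_interval s x1" by (rule R2[of _ "3*k" "n+1"]) (auto simp: assms x1_def field_simps)
  moreover have "R_interval x1 x2" by (rule R1[of _ "9*k+2" "n+2"]) (auto simp: x1_def x2_def field_simps)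
  moreover have "R_interval x2 t" by (rule R1[of _ "3*k+1" "n+1"]) (auto simp: assms x2_def field_simps)
  moreover have "has_color x1 Blue" by (rule colB[of "9*k+2" "n+2"]) (presburger, simp, simp add: x1_def field_simps)
  moreover have "has_color x2 Red" by (rule colR[of "3*k+1" "n+1"]) (presburger, simp, simp add: x2_def field_simps)
  ultimately show ?thesis using c unfolding R_interval_def by blast
next
  assume c: "(c1, c2) = (Red, Blue)"
  define x1 where "x1 = (3*k+1)/(3::real)^(n+1)"
  define x2 where "x2 = (9*k+5)/(3::real)^(n+2)"
  have "R_interval s x1" by (rule R1[of _ "3*k" "n+1"]) (auto simp: assms x1_def field_simps)
  moreover have "R_interval x1 x2" by (rule R2[of _ "3*k+1" "n+1"]) (auto simp: x1_def x2_def field_simps)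
  moreover have "R_interval x2 t" by (rule R1[of _ "9*k+5" "n+2"]) (auto simp: assms x2_def field_simps)
  moreover have "has_color x1 Red" by (rule colR[of "3*k+1" "n+1"]) (presburger, simp, simp add: x1_def field_simps)
  moreover have "has_color x2 Blue" by (rule colB[of "9*k+5" "n+2"]) (presburger, simp, simp add: x2_def field_simps)
  ultimately show ?thesis using c unfolding R_interval_def by blast
qed

lemma case3:
  fixes k::int assumes "s = (3*k+1)/3^(n+1)" "t = (k+1)/3^n"
    and "(c1, c2) = (Blue, Red) \<or> (c1, c2) = (Red, Blue)"
  shows "\<exists>x1 x2. s < x1 \<and> x1 < x2 \<and> x2 < t \<and>
           R_interval s x1 \<and> R_interval x1 x2 \<and> R_interval x2 t \<and>
           has_color x1 c1 \<and> has_color x2 c2"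
  using assms(3)
proof
  assume c: "(c1, c2) = (Blue, Red)"
  define x1 where "x1 = (3*k+2)/(3::real)^(n+1)"
  define x2 where "x2 = (9*k+7)/(3::real)^(n+2)"
  have "R_interval s x1" by (rule R1[of _ "3*k+1" "n+1"]) (auto simp: assms x1_def field_simps)
  moreover have "R_interval x1 x2" by (rule R1[of _ "9*k+6" "n+2"]) (auto simp: x1_def x2_def field_simps)
  moreover have "R_interval x2 t" by (rule R3[of _ "3*k+2" "n+1"]) (auto simp: assms x2_def field_simps)
  moreover have "has_color x1 Blue" by (rule colB[of "3*k+2" "n+1"]) (presburger, simp, simp add: x1_def field_simps)
  moreover have "has_color x2 Red" by (rule colR[of "9*k+7" "n+2"]) (presburger, simp, simp add: x2_def field_simps)
  ultimately show ?thesis using c unfolding R_interval_def by blast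
next
  assume c: "(c1, c2) = (Red, Blue)"
  define x1 where "x1 = (9*k+4)/(3::real)^(n+2)"
  define x2 where "x2 = (3*k+2)/(3::real)^(n+1)"
  have "R_interval s x1" by (rule R1[of _ "9*k+3" "n+2"]) (auto simp: assms x1_def field_simps)
  moreover have "R_interval x1 x2" by (rule R3[of _ "3*k+1" "n+1"]) (auto simp: x1_def x2_def field_simps)
  moreover have "R_interval x2 t" by (rule R1[of _ "3*k+2" "n+1"]) (auto simp: assms x2_def field_simps)
  moreover have "has_color x1 Red" by (rule colR[of "9*k+4" "n+2"]) (presburger, simp, simp add: x1_def field_simps)
  moreover have "has_color x2 Blue" by (rule colB[of "3*k+2" "n+1"]) (presburger, simp, simp add: x2_def field_simps)
  ultimately show ?thesis using c unfolding R_interval_def by blast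
qed

theorem lemmaB8:
  fixes s t :: real and c1 c2 :: color
  assumes "R_interval s t"
    and "(c1, c2) = (Blue, Red) \<or> (c1, c2) = (Red, Blue)"
  shows "\<exists>x1 x2. s < x1 \<and> x1 < x2 \<and> x2 < t \<and>
           R_interval s x1 \<and> R_interval x1 x2 \<and> R_interval x2 t \<and>
           has_color x1 c1 \<and> has_color x2 c2"
proof -
  obtain n::nat where h:
    "(3^n * (t - s) = 1 \<and> frac (3^n * s) = 0) \<or>
     (3^n * (t - s) = 2/3 \<and> frac (3^n * s) = 0) \<or>
     (3^n * (t - s) = 2/3 \<and> frac (3^n * s) = 1/3)"
    using assms(1) unfolding R_interval_def by blast
  have p: "(3::real)^n > 0" by simp
  show ?thesis
  proof (cases "frac (3^n * s) = 0")
    case True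
    then have "3^n * s \<in> \<int>" by simp
    then obtain k where k: "3^n * s = of_int k" by (metis Ints_cases)
    have sk: "s = k/3^n" using k p by (simp add: field_simps)
    from h True have "3^n * (t - s) = 1 \<or> 3^n * (t - s) = 2/3" by auto
    then show ?thesis
    proof
      assume "3^n * (t - s) = 1"
      then have "t = (k+1)/3^n" using k p by (simp add: field_simps)
      then show ?thesis using case1[OF sk _ assms(2)] by blast
    next
      assume "3^n * (t - s) = 2/3"
      then have "t = (3*k+2)/3^(n+1)" using k p by (simp add: field_simps)
      then show ?thesis using case2[OF sk _ assms(2)] by blast
    qed
  next
    case False
    with h have e: "3^n * (t - s) = 2/3" "frac (3^n * s) = 1/3" by auto
    then have "3^n * s - 1/3 \<in> \<int>" using frac_unique_iff by blast
    then obtain k where k: "3^n * s - 1/3 = of_int k" by (metis Ints_cases)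
    have sk: "s = (3*k+1)/3^(n+1)" using k p by (simp add: field_simps)
    have "t = (k+1)/3^n" using k e(1) p by (simp add: field_simps)
    then show ?thesis using case3[OF sk _ assms(2)] by blast
  qed
qed

end
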